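(* Let $(k,R,t)\in\mathbb{R}^3$ with $R>0$, $t\neq 0$, $k\neq 0$, $k\neq 1$, let $c=\frac{1-t^2}{1+t^2}$, $s=\frac{2t}{1+t^2}$, $g_k(u)=1-ks^2+2ksc\,u+ks^2u^2$, and let $G(X,u)=0$ be the reduced slope-chart equation of the trisector at its point at infinity $p_\infty=[0:0:1:0]$ (defined in the context). Then the local real projective structure near $p_\infty$ is constant on each connected component of $\{(k,R,t): R>0,\ t\neq 0,\ k\neq 0,\ k\neq 1\}$. More precisely: (1) If $k<0$ or $k>1$, then $g_k$ has two distinct real roots $u_+$ and $u_-$, and near each point $(X,u)=(0,u_\pm)$ the real zero set of $G$ is a transverse real $X$-shaped crossing (two smooth real branches crossing transversely). (2) If $0<k<1$, then $g_k$ has no real root, and no real branch of $\{G=0\}$ approaches the exceptional line $X=0$ at finite slope $u$. Consequently, the local topology at infinity is unchanged within each chamber of the complement of $\{k=0\}\cup\{k=1\}$.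
   Context: The trisector is the common zero set in $\mathbb{R}^3$ of $F_1=y^2-(xs-yc)^2+2z-1$ and $F_2=(x^2-2kz+R^2+k^2)^2-4R^2(x^2+y^2)$ (bisectors of the $x$-axis with the line through $(0,0,1)$ of direction $(c,s,0)$, and of the $x$-axis with the circle of radius $R$ centered at $(0,0,k)$ in the plane $z=k$). Homogenizations: $F_1^h=Y^2-(Xs-Yc)^2+2ZW-W^2$, $F_2^h=(X^2-2kZW+(R^2+k^2)W^2)^2-4R^2W^2(X^2+Y^2)$; the projective closure meets $W=0$ only at $p_\infty$. In the chart $Z=1$, $F_1^h(X,Y,1,W)=0$ is solved locally near the origin as $W=\omega(X,Y)=Q(X,Y)+O(\|(X,Y)\|^4)$ with $Q(X,Y)=\tfrac12(s^2X^2-2scXY-s^2Y^2)$. Slope coordinates: $Y=uX$. The reduced local equation is $G(X,u)=X^{-4}F_2^h(X,uX,1,\omega(X,uX))=g_k(u)^2+X^2H(X,u)$, where $H(X,u)=2(R^2+k^2)g_k(u)q(u)^2-4R^2(1+u^2)q(u)^2+O(X^2)$ and $q(u)=\tfrac12(s^2-2scu-s^2u^2)$. The line $X=0$ in the $(X,u)$-plane is the exceptional line parametrizing directions at $p_\infty$. *)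

theory Defs
  imports "HOL-Analysis.Analysis"
begin

text \<open>Rational parametrisation of the direction (c,s,0) of the line.\<close>
definition cpar :: "real \<Rightarrow> real" where
  "cpar t = (1 - t^2) / (1 + t^2)"

definition spar :: "real \<Rightarrow> real" where
  "spar t = 2 * t / (1 + t^2)"

text \<open>Homogenised bisector equations F1^h, F2^h in coordinates (X,Y,Z,W).\<close>
definition F1h :: "real \<Rightarrow> real \<Rightarrow> real \<Rightarrow> real \<Rightarrow> real \<Rightarrow> real \<Rightarrow> real" where
  "F1h s c X Y Z W = Y^2 - (X * s - Y * c)^2 + 2*Z*W - W^2"

definition F2h :: "real \<Rightarrow> real \<Rightarrow> real \<Rightarrow> real \<Rightarrow> real \<Rightarrow> real \<Rightarrow> real" where
  "F2h k R X Y Z W = (X^2 - 2*k*Z*W + (R^2 + k^2)*W^2)^2 - 4*R^2*W^2*(X^2 + Y^2)"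

text \<open>The local solution W = omega(X,Y) of F1h(X,Y,1,W) = 0 near the origin
  (the root of the quadratic in W with omega(0,0) = 0).\<close>
definition omega :: "real \<Rightarrow> real \<Rightarrow> real \<Rightarrow> real \<Rightarrow> real" where
  "omega s c X Y = 1 - sqrt (1 + Y^2 - (X * s - Y * c)^2)"

definition gk :: "real \<Rightarrow> real \<Rightarrow> real \<Rightarrow> real" where
  "gk k t u = 1 - k * (spar t)^2 + 2 * k * spar t * cpar t * u + k * (spar t)^2 * u^2"

text \<open>Reduced slope-chart equation G(X,u) = X^(-4) F2h(X,uX,1,omega(X,uX));
  at X = 0 it is given its continuous (analytic) extension g_k(u)^2.\<close>
definition trisectorG :: "real \<Rightarrow> real \<Rightarrow> real \<Rightarrow> real \<Rightarrow> real \<Rightarrow> real" where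
  "trisectorG k R t X u =
     (if X = 0 then (gk k t u)^2
      else F2h k R X (u*X) 1 (omega (spar t) (cpar t) X (u*X)) / X^4)"

definition smooth_on :: "real set \<Rightarrow> (real \<Rightarrow> real) \<Rightarrow> bool" where
  "smooth_on S f \<longleftrightarrow>
     (\<exists>D :: nat \<Rightarrow> real \<Rightarrow> real. D 0 = f \<and>
        (\<forall>n. \<forall>x\<in>S. (D n has_real_derivative D (Suc n) x) (at x)))"

end

theory Submission
  imports Defs
begin

inductive_set sm :: "(real \<times> real) set \<Rightarrow> (real \<times> real \<Rightarrow> real) set" for U where
  sm_const: "(\<lambda>z. c) \<in> sm U"
| sm_fst: "fst \<in> sm U"
| sm_snd: "snd \<in> sm U"
| sm_add: "f \<in> sm U \<Longrightarrow> g \<in> sm U \<Longrightarrow> (\<lambda>z. f z + g z) \<in> sm U"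
| sm_mult: "f \<in> sm U \<Longrightarrow> g \<in> sm U \<Longrightarrow> (\<lambda>z. f z * g z) \<in> sm U"
| sm_inv: "f \<in> sm U \<Longrightarrow> (\<forall>z\<in>U. f z \<noteq> 0) \<Longrightarrow> (\<lambda>z. inverse (f z)) \<in> sm U"
| sm_sqrt: "f \<in> sm U \<Longrightarrow> (\<forall>z\<in>U. f z > 0) \<Longrightarrow> (\<lambda>z. sqrt (f z)) \<in> sm U"

lemma sm_mono: "f \<in> sm U \<Longrightarrow> V \<subseteq> U \<Longrightarrow> f \<in> sm V"
  by (induction rule: sm.induct) (auto intro: sm.intros)

lemma sm_minus: "f \<in> sm U \<Longrightarrow> (\<lambda>z. - f z) \<in> sm U"
  using sm_mult[OF sm_const[of "-1"], of f U] by simp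

lemma sm_diff: "f \<in> sm U \<Longrightarrow> g \<in> sm U \<Longrightarrow> (\<lambda>z. f z - g z) \<in> sm U"
  using sm_add[OF _ sm_minus, of f U g] by simp

lemma sm_pow: "f \<in> sm U \<Longrightarrow> (\<lambda>z. f z ^ n) \<in> sm U"
  by (induction n) (auto intro: sm.intros)

lemma sm_deriv:
  assumes "f \<in> sm U"
  shows "\<exists>f1\<in>sm U. \<exists>f2\<in>sm U. \<forall>z\<in>U.
           (f has_derivative (\<lambda>h. fst h * f1 z + snd h * f2 z)) (at z)"
  using assms
proof (induction rule: sm.induct)
  case (sm_const c)
  show ?case
    by (rule bexI[of _ "\<lambda>z. 0"], rule bexI[of _ "\<lambda>z. 0"]) (auto intro: sm.intros)
next
  case sm_fst
  show ?case
    apply (rule bexI[of _ "\<lambda>z. 1"], rule bexI[of _ "\<lambda>z. 0"])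
    using has_derivative_fst[OF has_derivative_ident] by (auto intro: sm.intros)
next
  case sm_snd
  show ?case
    apply (rule bexI[of _ "\<lambda>z. 0"], rule bexI[of _ "\<lambda>z. 1"])
    using has_derivative_snd[OF has_derivative_ident] by (auto intro: sm.intros)
next
  case (sm_add f g)
  then obtain f1 f2 g1 g2 where f: "f1 \<in> sm U" "f2 \<in> sm U" "g1 \<in> sm U" "g2 \<in> sm U"
    and d: "\<forall>z\<in>U. (f has_derivative (\<lambda>h. fst h * f1 z + snd h * f2 z)) (at z)"
           "\<forall>z\<in>U. (g has_derivative (\<lambda>h. fst h * g1 z + snd h * g2 z)) (at z)" by blast
  show ?case
    apply (rule bexI[of _ "\<lambda>z. f1 z + g1 z"], rule bexI[of _ "\<lambda>z. f2 z + g2 z"])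
    using f d by (auto intro!: sm.intros has_derivative_eq_rhs[OF has_derivative_add] simp: algebra_simps)
next
  case (sm_mult f g)
  then obtain f1 f2 g1 g2 where f: "f1 \<in> sm U" "f2 \<in> sm U" "g1 \<in> sm U" "g2 \<in> sm U"
    and d: "\<forall>z\<in>U. (f has_derivative (\<lambda>h. fst h * f1 z + snd h * f2 z)) (at z)"
           "\<forall>z\<in>U. (g has_derivative (\<lambda>h. fst h * g1 z + snd h * g2 z)) (at z)" by blast
  show ?case
    apply (rule bexI[of _ "\<lambda>z. f z * g1 z + f1 z * g z"], rule bexI[of _ "\<lambda>z. f z * g2 z + f2 z * g z"])
    using f d sm_mult by (auto intro!: sm.intros has_derivative_eq_rhs[OF has_derivative_mult] simp: algebra_simps)
next
  case (sm_inv f)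
  then obtain f1 f2 where f: "f1 \<in> sm U" "f2 \<in> sm U"
    and d: "\<forall>z\<in>U. (f has_derivative (\<lambda>h. fst h * f1 z + snd h * f2 z)) (at z)" by blast
  have i: "(\<lambda>z. inverse (f z)) \<in> sm U" using sm_inv by (auto intro: sm.intros)
  show ?case
    apply (rule bexI[of _ "\<lambda>z. - (f1 z * (inverse (f z) * inverse (f z)))"],
        rule bexI[of _ "\<lambda>z. - (f2 z * (inverse (f z) * inverse (f z)))"])
  proof (intro ballI)
    fix z assume z: "z \<in> U"
    have "((\<lambda>z. inverse (f z)) has_derivative (\<lambda>h. - (inverse (f z) * (fst h * f1 z + snd h * f2 z) * inverse (f z)))) (at z)"
      using Deriv.has_derivative_inverse[where f=f and x=z, OF _ d[rule_format, OF z]] z sm_inv.hyps(2) by auto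
    then show "((\<lambda>z. inverse (f z)) has_derivative (\<lambda>h. fst h * - (f1 z * (inverse (f z) * inverse (f z))) + snd h * - (f2 z * (inverse (f z) * inverse (f z))))) (at z)"
      by (rule has_derivative_eq_rhs) (simp add: fun_eq_iff algebra_simps)
  qed (use f i in \<open>auto intro!: sm.intros sm_minus\<close>)
next
  case (sm_sqrt f)
  then obtain f1 f2 where f: "f1 \<in> sm U" "f2 \<in> sm U"
    and d: "\<forall>z\<in>U. (f has_derivative (\<lambda>h. fst h * f1 z + snd h * f2 z)) (at z)" by blast
  have i: "(\<lambda>z. inverse (sqrt (f z))) \<in> sm U" using sm_sqrt by (auto intro!: sm.intros)
  show ?case
    apply (rule bexI[of _ "\<lambda>z. f1 z * inverse (sqrt (f z)) * (1/2)"],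
        rule bexI[of _ "\<lambda>z. f2 z * inverse (sqrt (f z)) * (1/2)"])
  proof (intro ballI)
    fix z assume z: "z \<in> U"
    have "((\<lambda>z. sqrt (f z)) has_derivative (\<lambda>h. (fst h * f1 z + snd h * f2 z) * (inverse (sqrt (f z)) / 2))) (at z)"
      using has_derivative_real_sqrt[where x=z and g=f, OF _ d[rule_format, OF z]] z sm_sqrt.hyps(2) by auto
    then show "((\<lambda>z. sqrt (f z)) has_derivative (\<lambda>h. fst h * (f1 z * inverse (sqrt (f z)) * (1/2)) + snd h * (f2 z * inverse (sqrt (f z)) * (1/2)))) (at z)"
      by (rule has_derivative_eq_rhs) (simp add: fun_eq_iff algebra_simps)
  qed (rule sm_mult[OF sm_mult[OF f(2) i] sm_const], rule sm_mult[OF sm_mult[OF f(1) i] sm_const])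
qed

lemma partial1:
  assumes "(f has_derivative (\<lambda>h. fst h * a + snd h * b)) (at (x, y))"
  shows "((\<lambda>X. f (X, y)) has_real_derivative a) (at x)"
proof -
  have p: "((\<lambda>X. (X, y)) has_derivative (\<lambda>h. (h, 0))) (at x)"
    by (auto intro!: derivative_eq_intros)
  have "((\<lambda>X. f (X, y)) has_derivative (\<lambda>h. fst (h, 0::real) * a + snd (h, 0::real) * b)) (at x)"
    using has_derivative_compose[OF p assms] by simp
  then show ?thesis unfolding has_field_derivative_def
    by (rule has_derivative_eq_rhs) (auto simp: fun_eq_iff)
qed

lemma partial2:
  assumes "(f has_derivative (\<lambda>h. fst h * a + snd h * b)) (at (x, y))"
  shows "((\<lambda>u. f (x, u)) has_real_derivative b) (at y)"
proof -
  have p: "((\<lambda>u. (x, u)) has_derivative (\<lambda>h. (0, h))) (at y)"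
    by (auto intro!: derivative_eq_intros)
  have "((\<lambda>u. f (x, u)) has_derivative (\<lambda>h. fst (0::real, h) * a + snd (0::real, h) * b)) (at y)"
    using has_derivative_compose[OF p assms] by simp
  then show ?thesis unfolding has_field_derivative_def
    by (rule has_derivative_eq_rhs) (auto simp: fun_eq_iff)
qed

lemma sm_isCont: "f \<in> sm U \<Longrightarrow> z \<in> U \<Longrightarrow> isCont f z"
  using sm_deriv[of f U] has_derivative_continuous by blast

lemma mvt2:
  fixes \<Phi> \<Phi>1 \<Phi>2 :: "real \<times> real \<Rightarrow> real"
  assumes S: "convex S"
    and D: "\<forall>z\<in>S. (\<Phi> has_derivative (\<lambda>h. fst h * \<Phi>1 z + snd h * \<Phi>2 z)) (at z)"
    and ab: "a \<in> S" "b \<in> S"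
  shows "\<exists>\<xi>. \<xi> \<in> S \<and> dist \<xi> a \<le> dist b a \<and>
           \<Phi> b - \<Phi> a = fst (b - a) * \<Phi>1 \<xi> + snd (b - a) * \<Phi>2 \<xi>"
proof -
  define p where "p t = a + t *\<^sub>R (b - a)" for t :: real
  have pS: "p t \<in> S" if "0 \<le> t" "t \<le> 1" for t
  proof -
    have "p t = (1 - t) *\<^sub>R a + t *\<^sub>R b" by (simp add: p_def algebra_simps)
    then show ?thesis using S ab that by (simp add: convex_def)
  qed
  have dp: "(p has_derivative (\<lambda>h. h *\<^sub>R (b - a))) (at t)" for t
    unfolding p_def by (auto intro!: derivative_eq_intros)
  have der: "((\<lambda>t. \<Phi> (p t)) has_real_derivative
       (fst (b - a) * \<Phi>1 (p t) + snd (b - a) * \<Phi>2 (p t))) (at t)" if "0 \<le> t" "t \<le> 1" for t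
  proof -
    have "((\<lambda>t. \<Phi> (p t)) has_derivative (\<lambda>h. fst (h *\<^sub>R (b - a)) * \<Phi>1 (p t) + snd (h *\<^sub>R (b - a)) * \<Phi>2 (p t))) (at t)"
      using has_derivative_compose[OF dp, of \<Phi>] D pS[OF that] by blast
    then show ?thesis unfolding has_field_derivative_def
      by (rule has_derivative_eq_rhs) (auto simp: fun_eq_iff algebra_simps)
  qed
  obtain \<tau> where \<tau>: "0 < \<tau>" "\<tau> < 1"
    "\<Phi> (p 1) - \<Phi> (p 0) = (1 - 0) * (fst (b - a) * \<Phi>1 (p \<tau>) + snd (b - a) * \<Phi>2 (p \<tau>))"
    using MVT2[of 0 1 "\<lambda>t. \<Phi> (p t)" "\<lambda>t. fst (b - a) * \<Phi>1 (p t) + snd (b - a) * \<Phi>2 (p t)"] der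
    by auto
  have "dist (p \<tau>) a = \<tau> * dist b a"
    using \<tau> by (simp add: p_def dist_norm norm_minus_commute)
  also have "\<dots> \<le> dist b a" using \<tau> by (simp add: mult_left_le_one_le)
  finally show ?thesis
    using \<tau> pS[of \<tau>] by (intro exI[of _ "p \<tau>"]) (auto simp: p_def)
qed


lemma isCont_pos_nbhd:
  fixes f :: "real \<Rightarrow> real"
  assumes "isCont f x" "f x > 0"
  shows "\<exists>d>0. \<forall>y. \<bar>y - x\<bar> < d \<longrightarrow> f y > 0"
proof -
  obtain d where d: "d > 0" "\<forall>y. dist y x < d \<longrightarrow> dist (f y) (f x) < f x"
    using assms continuous_at_eps_delta[of x f] by blast
  show ?thesis using d by (intro exI[of _ d]) (auto simp: dist_real_def)
qed

lemma isCont_neg_nbhd: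
  fixes f :: "real \<Rightarrow> real"
  assumes "isCont f x" "f x < 0"
  shows "\<exists>d>0. \<forall>y. \<bar>y - x\<bar> < d \<longrightarrow> f y < 0"
  using isCont_pos_nbhd[where f="\<lambda>y. - f y" and x=x] assms by auto

lemma curve_pos:
  fixes \<Phi> \<Phi>1 \<Phi>2 :: "real \<times> real \<Rightarrow> real"
  assumes U: "open U" and sm: "\<Phi> \<in> sm U" "\<Phi>1 \<in> sm U" "\<Phi>2 \<in> sm U"
    and D: "\<forall>z\<in>U. (\<Phi> has_derivative (\<lambda>h. fst h * \<Phi>1 z + snd h * \<Phi>2 z)) (at z)"
    and z0: "(0,u0) \<in> U" "\<Phi> (0,u0) = 0" "\<Phi>2 (0,u0) > 0"
  shows "\<exists>\<delta>0>0. \<forall>\<delta>. 0 < \<delta> \<and> \<delta> \<le> \<delta>0 \<longrightarrow> (\<exists>\<epsilon>>0. \<exists>\<phi>. smooth_on {-\<epsilon><..<\<epsilon>} \<phi> \<and> \<phi> 0 = u0 \<and>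
      (\<phi> has_real_derivative (- \<Phi>1 (0,u0) / \<Phi>2 (0,u0))) (at 0) \<and>
      (\<forall>X\<in>{-\<epsilon><..<\<epsilon>}. \<bar>\<phi> X - u0\<bar> < \<delta> \<and> \<Phi> (X, \<phi> X) = 0) \<and>
      (\<forall>X u. \<bar>X\<bar> < \<epsilon> \<and> \<bar>u - u0\<bar> < \<delta> \<longrightarrow> (X,u) \<in> U \<and> (\<Phi> (X,u) = 0 \<longrightarrow> u = \<phi> X)))"
proof -
  have cont2: "continuous_on U \<Phi>2"
    using sm(3) sm_isCont continuous_at_imp_continuous_on by blast
  define V where "V = U \<inter> \<Phi>2 -` {0<..}"
  have "open (\<Phi>2 -` {0<..} \<inter> U)" using continuous_on_open_vimage[OF U, of \<Phi>2] cont2 open_greaterThan by blast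
  then have "open V" unfolding V_def by (simp add: Int_commute)
  moreover have "(0,u0) \<in> V" using z0 by (auto simp: V_def)
  ultimately obtain \<rho> where \<rho>: "\<rho> > 0" "ball (0,u0) \<rho> \<subseteq> V" by (meson open_contains_ball)
  define r where "r = \<rho>/2"
  define Bx where "Bx = {-r<..<r} \<times> {u0-r<..<u0+r}"
  have r: "r > 0" using \<rho> by (simp add: r_def)
  have BxV: "z \<in> U \<and> \<Phi>2 z > 0" if "z \<in> Bx" for z
  proof -
    obtain X u where z: "z = (X,u)" by (cases z)
    have a: "\<bar>X\<bar> < r" "\<bar>u - u0\<bar> < r" using that z by (auto simp: Bx_def)
    have "X^2 < r^2" using power_strict_mono[of "\<bar>X\<bar>" r 2] a(1) by simp
    moreover have "(u - u0)^2 < r^2" using power_strict_mono[of "\<bar>u - u0\<bar>" r 2] a(2) by simp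
    moreover have "(dist 0 X)^2 + (dist u0 u)^2 = X^2 + (u - u0)^2"
      by (simp add: dist_real_def power2_commute)
    moreover have "\<rho>^2 = 4 * r^2" by (simp add: r_def power2_eq_square)
    moreover have "r^2 \<ge> 0" by simp
    ultimately have "(dist 0 X)^2 + (dist u0 u)^2 < \<rho>^2" by linarith
    then have "sqrt ((dist 0 X)^2 + (dist u0 u)^2) < sqrt (\<rho>^2)"
      using real_sqrt_less_iff by blast
    then have "dist (0,u0) z < \<rho>" using \<rho> by (simp add: z dist_Pair_Pair)
    then show ?thesis using \<rho> by (auto simp: V_def)
  qed
  have conv_Bx: "convex Bx" by (simp add: Bx_def convex_Times)
  have DBx: "\<forall>z\<in>Bx. (\<Phi> has_derivative (\<lambda>h. fst h * \<Phi>1 z + snd h * \<Phi>2 z)) (at z)"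
    using D BxV by blast
  have inBx: "(X,u) \<in> Bx" if "\<bar>X\<bar> < r" "\<bar>u - u0\<bar> < r" for X u
    using that by (auto simp: Bx_def)
  have mono: "\<Phi> (X,a) < \<Phi> (X,b)" if "\<bar>X\<bar> < r" "u0 - r < a" "a < b" "b < u0 + r" for X a b
  proof (rule DERIV_pos_imp_increasing[of a b "\<lambda>u. \<Phi> (X,u)"])
    fix x assume "a \<le> x" "x \<le> b"
    then have "(X,x) \<in> Bx" using that by (intro inBx) auto
    then show "\<exists>y. ((\<lambda>u. \<Phi> (X, u)) has_real_derivative y) (at x) \<and> 0 < y"
      using partial2[of \<Phi> "\<Phi>1 (X,x)" "\<Phi>2 (X,x)" X x] DBx BxV by blast
  qed (use that in auto)
  have contu: "continuous_on {a..b} (\<lambda>u. \<Phi> (X,u))" if "\<bar>X\<bar> < r" "u0 - r < a" "b < u0 + r" for X a b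
  proof (rule continuous_at_imp_continuous_on, intro ballI)
    fix x assume "x \<in> {a..b}"
    then have "(X,x) \<in> Bx" using that by (intro inBx) auto
    then show "isCont (\<lambda>u. \<Phi> (X,u)) x"
      using partial2[of \<Phi> "\<Phi>1 (X,x)" "\<Phi>2 (X,x)" X x] DBx DERIV_isCont by blast
  qed
  have contX: "isCont (\<lambda>X. \<Phi> (X,u)) X" if "\<bar>X\<bar> < r" "\<bar>u - u0\<bar> < r" for X u
    using partial1[of \<Phi> "\<Phi>1 (X,u)" "\<Phi>2 (X,u)" X u] DBx inBx[OF that] DERIV_isCont by blast
  show ?thesis
  proof (rule exI[of _ "r/2"], intro conjI allI impI)
    show "r/2 > 0" using r by simp
    fix \<delta> assume \<delta>: "0 < \<delta> \<and> \<delta> \<le> r/2"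
    have lo: "\<Phi> (0,u0-\<delta>) < 0" using mono[of 0 "u0-\<delta>" u0] z0 \<delta> r by auto
    have hi: "\<Phi> (0,u0+\<delta>) > 0" using mono[of 0 u0 "u0+\<delta>"] z0 \<delta> r by auto
    obtain e1 where e1: "e1 > 0" "\<forall>X. \<bar>X - 0\<bar> < e1 \<longrightarrow> \<Phi> (X,u0-\<delta>) < 0"
      using isCont_neg_nbhd[OF contX[of 0 "u0-\<delta>"]] lo r \<delta> by auto
    obtain e2 where e2: "e2 > 0" "\<forall>X. \<bar>X - 0\<bar> < e2 \<longrightarrow> \<Phi> (X,u0+\<delta>) > 0"
      using isCont_pos_nbhd[OF contX[of 0 "u0+\<delta>"]] hi r \<delta> by auto
    define \<epsilon> where "\<epsilon> = min r (min e1 e2)"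
    have \<epsilon>: "\<epsilon> > 0" "\<epsilon> \<le> r" using r e1 e2 by (auto simp: \<epsilon>_def)
    have ex: "\<exists>!u. \<bar>u - u0\<bar> < \<delta> \<and> \<Phi> (X,u) = 0" if X: "\<bar>X\<bar> < \<epsilon>" for X
    proof -
      have s: "\<Phi> (X,u0-\<delta>) < 0" "\<Phi> (X,u0+\<delta>) > 0" using X e1 e2 by (auto simp: \<epsilon>_def)
      obtain u where u: "u0-\<delta> \<le> u" "u \<le> u0+\<delta>" "\<Phi> (X,u) = 0"
        using IVT'[of "\<lambda>u. \<Phi> (X,u)" "u0-\<delta>" 0 "u0+\<delta>"] contu[of X "u0-\<delta>" "u0+\<delta>"] s X \<epsilon> \<delta>
        by auto
      have "u \<noteq> u0-\<delta>" "u \<noteq> u0+\<delta>" using u s by auto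
      then have uu: "\<bar>u - u0\<bar> < \<delta>" using u by auto
      show ?thesis
      proof (rule ex1I[of _ u])
        show "\<bar>u - u0\<bar> < \<delta> \<and> \<Phi> (X, u) = 0" using uu u by auto
        fix v assume v: "\<bar>v - u0\<bar> < \<delta> \<and> \<Phi> (X, v) = 0"
        show "v = u"
        proof (rule ccontr)
          assume "v \<noteq> u"
          then have "v < u \<or> u < v" by auto
          then show False
            using mono[of X v u] mono[of X u v] v uu u X \<epsilon> \<delta> by (auto simp: abs_less_iff)
        qed
      qed
    qed
    define \<phi> where "\<phi> X = (THE u. \<bar>u - u0\<bar> < \<delta> \<and> \<Phi> (X,u) = 0)" for X
    have \<phi>: "\<bar>\<phi> X - u0\<bar> < \<delta> \<and> \<Phi> (X, \<phi> X) = 0" if "\<bar>X\<bar> < \<epsilon>" for X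
      unfolding \<phi>_def using theI'[OF ex[OF that]] .
    have \<phi>uniq: "u = \<phi> X" if "\<bar>X\<bar> < \<epsilon>" "\<bar>u - u0\<bar> < \<delta>" "\<Phi> (X,u) = 0" for X u
      unfolding \<phi>_def using the1_equality[OF ex[OF that(1)]] that by auto
    have \<phi>0: "\<phi> 0 = u0" using \<phi>uniq[of 0 u0] z0 \<epsilon> \<delta> by auto
    have inB: "(X, u) \<in> Bx" if "\<bar>X\<bar> < \<epsilon>" "\<bar>u - u0\<bar> < \<delta>" for X u
      using that \<epsilon> \<delta> by (intro inBx) auto
    have \<phi>B: "(X, \<phi> X) \<in> Bx" if "\<bar>X\<bar> < \<epsilon>" for X
      using inB \<phi> that by blast
    have \<phi>cont: "isCont \<phi> X1" if X1: "\<bar>X1\<bar> < \<epsilon>" for X1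
    proof -
      have \<phi>X1: "\<bar>\<phi> X1 - u0\<bar> < \<delta>" "\<Phi> (X1, \<phi> X1) = 0" using \<phi>[OF X1] by auto
      have d0: "\<bar>X\<bar> < \<epsilon>" if "\<bar>X - X1\<bar> < \<epsilon> - \<bar>X1\<bar>" for X using that by auto
      have lower: "\<exists>d>0. \<forall>X. \<bar>X - X1\<bar> < d \<longrightarrow> \<phi> X > \<phi> X1 - \<eta>" if \<eta>: "\<eta> > 0" for \<eta>
      proof (cases "\<phi> X1 - \<eta> \<le> u0 - \<delta>")
        case True
        show ?thesis
          by (rule exI[of _ "\<epsilon> - \<bar>X1\<bar>"]) (use X1 True \<phi> d0 in \<open>force\<close>)
      next
        case False
        define a where "a = \<phi> X1 - \<eta>"
        have "\<Phi> (X1, a) < \<Phi> (X1, \<phi> X1)"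
          using mono[of X1 a "\<phi> X1"] False \<phi>X1 X1 \<epsilon> \<delta> \<eta> by (auto simp: a_def)
        then have "\<Phi> (X1, a) < 0" using \<phi>X1 by simp
        then obtain d where d: "d > 0" "\<forall>X. \<bar>X - X1\<bar> < d \<longrightarrow> \<Phi> (X, a) < 0"
          using isCont_neg_nbhd[OF contX[of X1 a]] X1 \<epsilon> \<delta> False \<phi>X1 \<eta> by (auto simp: a_def abs_less_iff)
        show ?thesis
        proof (intro exI[of _ "min d (\<epsilon> - \<bar>X1\<bar>)"] conjI allI impI)
          show "0 < min d (\<epsilon> - \<bar>X1\<bar>)" using d X1 by auto
          fix X assume X: "\<bar>X - X1\<bar> < min d (\<epsilon> - \<bar>X1\<bar>)"
          then have XX: "\<bar>X\<bar> < \<epsilon>" "\<Phi> (X, a) < 0" using d d0 by auto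
          show "\<phi> X1 - \<eta> < \<phi> X"
          proof (rule ccontr)
            assume "\<not> \<phi> X1 - \<eta> < \<phi> X"
            then have "\<phi> X \<le> a" by (simp add: a_def)
            moreover have "\<phi> X \<noteq> a" using XX \<phi>[OF XX(1)] by auto
            ultimately have "\<Phi> (X, \<phi> X) < \<Phi> (X, a)"
              using mono[of X "\<phi> X" a] \<phi>[OF XX(1)] XX \<epsilon> \<delta> \<phi>X1 \<eta> by (auto simp: a_def abs_less_iff)
            then show False using XX \<phi>[OF XX(1)] by simp
          qed
        qed
      qed
      have upper: "\<exists>d>0. \<forall>X. \<bar>X - X1\<bar> < d \<longrightarrow> \<phi> X < \<phi> X1 + \<eta>" if \<eta>: "\<eta> > 0" for \<eta>
      proof (cases "\<phi> X1 + \<eta> \<ge> u0 + \<delta>")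
        case True
        show ?thesis
          by (rule exI[of _ "\<epsilon> - \<bar>X1\<bar>"]) (use X1 True \<phi> d0 in \<open>force\<close>)
      next
        case False
        define a where "a = \<phi> X1 + \<eta>"
        have "\<Phi> (X1, \<phi> X1) < \<Phi> (X1, a)"
          using mono[of X1 "\<phi> X1" a] False \<phi>X1 X1 \<epsilon> \<delta> \<eta> by (auto simp: a_def)
        then have "\<Phi> (X1, a) > 0" using \<phi>X1 by simp
        then obtain d where d: "d > 0" "\<forall>X. \<bar>X - X1\<bar> < d \<longrightarrow> \<Phi> (X, a) > 0"
          using isCont_pos_nbhd[OF contX[of X1 a]] X1 \<epsilon> \<delta> False \<phi>X1 \<eta> by (auto simp: a_def abs_less_iff)
        show ?thesis
        proof (intro exI[of _ "min d (\<epsilon> - \<bar>X1\<bar>)"] conjI allI impI)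
          show "0 < min d (\<epsilon> - \<bar>X1\<bar>)" using d X1 by auto
          fix X assume X: "\<bar>X - X1\<bar> < min d (\<epsilon> - \<bar>X1\<bar>)"
          then have XX: "\<bar>X\<bar> < \<epsilon>" "\<Phi> (X, a) > 0" using d d0 by auto
          show "\<phi> X < \<phi> X1 + \<eta>"
          proof (rule ccontr)
            assume "\<not> \<phi> X < \<phi> X1 + \<eta>"
            then have "\<phi> X \<ge> a" by (simp add: a_def)
            moreover have "\<phi> X \<noteq> a" using XX \<phi>[OF XX(1)] by auto
            ultimately have "\<Phi> (X, a) < \<Phi> (X, \<phi> X)"
              using mono[of X a "\<phi> X"] \<phi>[OF XX(1)] XX \<epsilon> \<delta> \<phi>X1 \<eta> by (auto simp: a_def abs_less_iff)
            then show False using XX \<phi>[OF XX(1)] by simp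
          qed
        qed
      qed
      show ?thesis unfolding continuous_at_eps_delta
      proof (intro allI impI)
        fix \<eta> :: real assume \<eta>: "\<eta> > 0"
        obtain d1 where d1: "d1 > 0" "\<forall>X. \<bar>X - X1\<bar> < d1 \<longrightarrow> \<phi> X > \<phi> X1 - \<eta>" using lower[OF \<eta>] by blast
        obtain d2 where d2: "d2 > 0" "\<forall>X. \<bar>X - X1\<bar> < d2 \<longrightarrow> \<phi> X < \<phi> X1 + \<eta>" using upper[OF \<eta>] by blast
        show "\<exists>d>0. \<forall>x'. dist x' X1 < d \<longrightarrow> dist (\<phi> x') (\<phi> X1) < \<eta>"
          using d1 d2 by (intro exI[of _ "min d1 d2"]) (auto simp: dist_real_def abs_less_iff)
      qed
    qed
    define G where "G z = - \<Phi>1 z / \<Phi>2 z" for z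
    have \<phi>der: "(\<phi> has_real_derivative G (X1, \<phi> X1)) (at X1)" if X1: "\<bar>X1\<bar> < \<epsilon>" for X1
    proof -
      define z1 where "z1 = (X1, \<phi> X1)"
      have z1B: "z1 \<in> Bx" using \<phi>B[OF X1] by (simp add: z1_def)
      have Gc: "isCont G z1"
        unfolding G_def using sm_isCont[OF sm(2)] sm_isCont[OF sm(3)] BxV[OF z1B]
        by (intro continuous_intros) auto
      have key: "\<exists>\<xi>. \<xi> \<in> Bx \<and> dist \<xi> z1 \<le> dist (X, \<phi> X) z1 \<and> (\<phi> X - \<phi> X1) / (X - X1) = G \<xi>"
        if X: "\<bar>X\<bar> < \<epsilon>" "X \<noteq> X1" for X
      proof -
        obtain \<xi> where \<xi>: "\<xi> \<in> Bx" "dist \<xi> z1 \<le> dist (X, \<phi> X) z1"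
          "\<Phi> (X, \<phi> X) - \<Phi> z1 = fst ((X, \<phi> X) - z1) * \<Phi>1 \<xi> + snd ((X, \<phi> X) - z1) * \<Phi>2 \<xi>"
          using mvt2[OF conv_Bx DBx z1B \<phi>B[OF X(1)]] by blast
        have "0 = (X - X1) * \<Phi>1 \<xi> + (\<phi> X - \<phi> X1) * \<Phi>2 \<xi>"
          using \<xi>(3) \<phi>[OF X(1)] \<phi>[OF X1] by (simp add: z1_def)
        moreover have "\<Phi>2 \<xi> > 0" using BxV[OF \<xi>(1)] by simp
        ultimately have "(\<phi> X - \<phi> X1) / (X - X1) = G \<xi>"
          using X(2) by (simp add: G_def field_simps)
        then show ?thesis using \<xi> by blast
      qed
      define \<xi>f where "\<xi>f X = (SOME \<xi>. \<xi> \<in> Bx \<and> dist \<xi> z1 \<le> dist (X, \<phi> X) z1 \<and> (\<phi> X - \<phi> X1) / (X - X1) = G \<xi>)" for X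
      have ev: "\<forall>\<^sub>F X in at X1. X \<in> {-\<epsilon><..<\<epsilon>} - {X1}"
        using eventually_at_in_open[of "{-\<epsilon><..<\<epsilon>}" X1] X1 by (auto simp: abs_less_iff)
      have ev2: "\<forall>\<^sub>F X in at X1. \<xi>f X \<in> Bx \<and> dist (\<xi>f X) z1 \<le> dist (X, \<phi> X) z1 \<and> (\<phi> X - \<phi> X1) / (X - X1) = G (\<xi>f X)"
      proof (rule eventually_mono[OF ev])
        fix X assume "X \<in> {-\<epsilon><..<\<epsilon>} - {X1}"
        then have "\<bar>X\<bar> < \<epsilon>" "X \<noteq> X1" by auto
        from someI_ex[OF key[OF this]]
        show "\<xi>f X \<in> Bx \<and> dist (\<xi>f X) z1 \<le> dist (X, \<phi> X) z1 \<and> (\<phi> X - \<phi> X1) / (X - X1) = G (\<xi>f X)"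
          unfolding \<xi>f_def .
      qed
      have t1: "((\<lambda>X. (X, \<phi> X)) \<longlongrightarrow> z1) (at X1)"
        unfolding z1_def using \<phi>cont[OF X1] by (intro tendsto_intros) (auto simp: isCont_def)
      have t2: "((\<lambda>X. dist (X, \<phi> X) z1) \<longlongrightarrow> 0) (at X1)"
        using tendsto_dist_iff[THEN iffD1, OF t1] .
      have "((\<lambda>X. dist (\<xi>f X) z1) \<longlongrightarrow> 0) (at X1)"
        by (rule Lim_null_comparison[OF _ t2]) (rule eventually_mono[OF ev2], auto)
      then have t3: "(\<xi>f \<longlongrightarrow> z1) (at X1)" by (rule tendsto_dist_iff[THEN iffD2])
      have "((\<lambda>X. G (\<xi>f X)) \<longlongrightarrow> G z1) (at X1)" by (rule isCont_tendsto_compose[OF Gc t3])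
      then have "((\<lambda>X. (\<phi> X - \<phi> X1) / (X - X1)) \<longlongrightarrow> G z1) (at X1)"
        by (rule Lim_transform_eventually) (rule eventually_mono[OF ev2], auto)
      then show ?thesis unfolding has_field_derivative_iff z1_def by simp
    qed
    define F where "F = (\<lambda>z. - (\<Phi>1 z * inverse (\<Phi>2 z)))"
    have BxU: "Bx \<subseteq> U" using BxV by blast
    have Fsm: "F \<in> sm Bx" unfolding F_def
      using BxV by (intro sm_minus sm_mult sm_inv sm_mono[OF sm(2) BxU] sm_mono[OF sm(3) BxU]) (auto, fastforce)
    have \<phi>der': "(\<phi> has_real_derivative F (X, \<phi> X)) (at X)" if "\<bar>X\<bar> < \<epsilon>" for X
      using \<phi>der[OF that] by (simp add: F_def G_def divide_inverse)
    have chain: "\<exists>h'\<in>sm Bx. \<forall>X\<in>{-\<epsilon><..<\<epsilon>}. ((\<lambda>X. h (X, \<phi> X)) has_real_derivative h' (X, \<phi> X)) (at X)"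
      if h: "h \<in> sm Bx" for h
    proof -
      obtain h1 h2 where hh: "h1 \<in> sm Bx" "h2 \<in> sm Bx"
        "\<forall>z\<in>Bx. (h has_derivative (\<lambda>k. fst k * h1 z + snd k * h2 z)) (at z)"
        using sm_deriv[OF h] by blast
      show ?thesis
      proof (rule bexI[of _ "\<lambda>z. h1 z + h2 z * F z"], intro ballI)
        fix X :: real assume "X \<in> {-\<epsilon><..<\<epsilon>}"
        then have X: "\<bar>X\<bar> < \<epsilon>" by auto
        have p: "((\<lambda>X. (X, \<phi> X)) has_derivative (\<lambda>t. (t, F (X, \<phi> X) * t))) (at X)"
          using has_derivative_Pair[OF has_derivative_ident \<phi>der'[OF X, unfolded has_field_derivative_def]] .
        have "((\<lambda>X. h (X, \<phi> X)) has_derivative (\<lambda>t. fst (t, F (X, \<phi> X) * t) * h1 (X, \<phi> X) + snd (t, F (X, \<phi> X) * t) * h2 (X, \<phi> X))) (at X)"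
          using has_derivative_compose[OF p, of h] hh(3) \<phi>B[OF X] by blast
        then show "((\<lambda>X. h (X, \<phi> X)) has_real_derivative h1 (X, \<phi> X) + h2 (X, \<phi> X) * F (X, \<phi> X)) (at X)"
          unfolding has_field_derivative_def
          by (rule has_derivative_eq_rhs) (auto simp: fun_eq_iff algebra_simps)
      qed (use hh Fsm in \<open>auto intro: sm_add sm_mult\<close>)
    qed
    define P where "P h h' \<longleftrightarrow> h' \<in> sm Bx \<and> (\<forall>X\<in>{-\<epsilon><..<\<epsilon>}. ((\<lambda>X. h (X, \<phi> X)) has_real_derivative h' (X, \<phi> X)) (at X))" for h h'
    have chainP: "\<exists>h'. P h h'" if "h \<in> sm Bx" for h
      using chain[OF that] unfolding P_def by blast
    define hs where "hs = rec_nat snd (\<lambda>n h. SOME h'. P h h')"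
    have hs0: "hs 0 = snd" and hsS: "hs (Suc n) = (SOME h'. P (hs n) h')" for n
      by (simp_all add: hs_def)
    have hsm: "hs n \<in> sm Bx \<and> P (hs n) (hs (Suc n))" for n
    proof (induction n)
      case 0
      have "snd \<in> sm Bx" by (rule sm_snd)
      from someI_ex[OF chainP[OF this]] show ?case
        by (simp add: hs0 hsS[of 0] sm_snd)
    next
      case (Suc n)
      then have a: "hs (Suc n) \<in> sm Bx" by (simp add: P_def)
      from someI_ex[OF chainP[OF a]] show ?case
        using a by (simp add: hsS[of "Suc n"])
    qed
    have smooth: "smooth_on {-\<epsilon><..<\<epsilon>} \<phi>"
      unfolding smooth_on_def
    proof (intro exI[of _ "\<lambda>n X. hs n (X, \<phi> X)"] conjI allI ballI)
      show "(\<lambda>X. hs 0 (X, \<phi> X)) = \<phi>" by (simp add: hs0)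
      fix n X assume "X \<in> {-\<epsilon><..<\<epsilon>}"
      then show "((\<lambda>X. hs n (X, \<phi> X)) has_real_derivative hs (Suc n) (X, \<phi> X)) (at X)"
        using hsm[of n] by (simp add: P_def)
    qed
    show "\<exists>\<epsilon>>0. \<exists>\<phi>. smooth_on {-\<epsilon><..<\<epsilon>} \<phi> \<and> \<phi> 0 = u0 \<and>
      (\<phi> has_real_derivative (- \<Phi>1 (0,u0) / \<Phi>2 (0,u0))) (at 0) \<and>
      (\<forall>X\<in>{-\<epsilon><..<\<epsilon>}. \<bar>\<phi> X - u0\<bar> < \<delta> \<and> \<Phi> (X, \<phi> X) = 0) \<and>
      (\<forall>X u. \<bar>X\<bar> < \<epsilon> \<and> \<bar>u - u0\<bar> < \<delta> \<longrightarrow> (X,u) \<in> U \<and> (\<Phi> (X,u) = 0 \<longrightarrow> u = \<phi> X))"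
    proof (intro exI[of _ \<epsilon>] exI[of _ \<phi>] conjI allI impI ballI)
      show "(\<phi> has_real_derivative (- \<Phi>1 (0,u0) / \<Phi>2 (0,u0))) (at 0)"
        using \<phi>der[of 0] \<epsilon> \<phi>0 by (simp add: G_def)
      show "\<epsilon> > 0" by (rule \<epsilon>(1))
      show "smooth_on {-\<epsilon><..<\<epsilon>} \<phi>" by (rule smooth)
      show "\<phi> 0 = u0" by (rule \<phi>0)
    next
      fix X :: real assume "X \<in> {-\<epsilon><..<\<epsilon>}"
      then have "\<bar>X\<bar> < \<epsilon>" by auto
      then show "\<bar>\<phi> X - u0\<bar> < \<delta>" "\<Phi> (X, \<phi> X) = 0" using \<phi> by blast+
    next
      fix X u assume a: "\<bar>X\<bar> < \<epsilon> \<and> \<bar>u - u0\<bar> < \<delta>"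
      then show "(X, u) \<in> U" using inB BxV by blast
      fix X u assume a: "\<bar>X\<bar> < \<epsilon> \<and> \<bar>u - u0\<bar> < \<delta>" "\<Phi> (X, u) = 0"
      then show "u = \<phi> X" using \<phi>uniq by blast
    qed
  qed
qed


lemma curve:
  fixes \<Phi> \<Phi>1 \<Phi>2 :: "real \<times> real \<Rightarrow> real"
  assumes U: "open U" and sm: "\<Phi> \<in> sm U" "\<Phi>1 \<in> sm U" "\<Phi>2 \<in> sm U"
    and D: "\<forall>z\<in>U. (\<Phi> has_derivative (\<lambda>h. fst h * \<Phi>1 z + snd h * \<Phi>2 z)) (at z)"
    and z0: "(0,u0) \<in> U" "\<Phi> (0,u0) = 0" "\<Phi>2 (0,u0) \<noteq> 0"
  shows "\<exists>\<delta>0>0. \<forall>\<delta>. 0 < \<delta> \<and> \<delta> \<le> \<delta>0 \<longrightarrow> (\<exists>\<epsilon>>0. \<exists>\<phi>. smooth_on {-\<epsilon><..<\<epsilon>} \<phi> \<and> \<phi> 0 = u0 \<and>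
      (\<phi> has_real_derivative (- \<Phi>1 (0,u0) / \<Phi>2 (0,u0))) (at 0) \<and>
      (\<forall>X\<in>{-\<epsilon><..<\<epsilon>}. \<bar>\<phi> X - u0\<bar> < \<delta> \<and> \<Phi> (X, \<phi> X) = 0) \<and>
      (\<forall>X u. \<bar>X\<bar> < \<epsilon> \<and> \<bar>u - u0\<bar> < \<delta> \<longrightarrow> (X,u) \<in> U \<and> (\<Phi> (X,u) = 0 \<longrightarrow> u = \<phi> X)))"
proof (cases "\<Phi>2 (0,u0) > 0")
  case True
  then show ?thesis using curve_pos[OF U sm D z0(1,2)] by blast
next
  case False
  then have neg: "- \<Phi>2 (0,u0) > 0" using z0(3) by auto
  have D': "\<forall>z\<in>U. ((\<lambda>z. - \<Phi> z) has_derivative (\<lambda>h. fst h * - \<Phi>1 z + snd h * - \<Phi>2 z)) (at z)"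
  proof
    fix z assume "z \<in> U"
    then have "((\<lambda>z. - \<Phi> z) has_derivative (\<lambda>h. - (fst h * \<Phi>1 z + snd h * \<Phi>2 z))) (at z)"
      using D has_derivative_minus by blast
    then show "((\<lambda>z. - \<Phi> z) has_derivative (\<lambda>h. fst h * - \<Phi>1 z + snd h * - \<Phi>2 z)) (at z)"
      by (rule has_derivative_eq_rhs) (simp add: fun_eq_iff)
  qed
  have "\<exists>\<delta>0>0. \<forall>\<delta>. 0 < \<delta> \<and> \<delta> \<le> \<delta>0 \<longrightarrow> (\<exists>\<epsilon>>0. \<exists>\<phi>. smooth_on {-\<epsilon><..<\<epsilon>} \<phi> \<and> \<phi> 0 = u0 \<and>
      (\<phi> has_real_derivative (- (- \<Phi>1 (0,u0)) / (- \<Phi>2 (0,u0)))) (at 0) \<and>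
      (\<forall>X\<in>{-\<epsilon><..<\<epsilon>}. \<bar>\<phi> X - u0\<bar> < \<delta> \<and> - \<Phi> (X, \<phi> X) = 0) \<and>
      (\<forall>X u. \<bar>X\<bar> < \<epsilon> \<and> \<bar>u - u0\<bar> < \<delta> \<longrightarrow> (X,u) \<in> U \<and> (- \<Phi> (X,u) = 0 \<longrightarrow> u = \<phi> X)))"
    using curve_pos[of U "\<lambda>z. - \<Phi> z" "\<lambda>z. - \<Phi>1 z" "\<lambda>z. - \<Phi>2 z" u0] U sm_minus[OF sm(1)]
      sm_minus[OF sm(2)] sm_minus[OF sm(3)] D' z0 neg by simp
  then show ?thesis by simp
qed

lemma smooth_on_subset: "smooth_on S f \<Longrightarrow> T \<subseteq> S \<Longrightarrow> smooth_on T f"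
  unfolding smooth_on_def by blast

lemma sm_div: "f \<in> sm U \<Longrightarrow> g \<in> sm U \<Longrightarrow> \<forall>z\<in>U. g z \<noteq> 0 \<Longrightarrow> (\<lambda>z. f z / g z) \<in> sm U"
  using sm_mult[OF _ sm_inv, of f U g] by (simp add: divide_inverse)

definition aa :: "real \<Rightarrow> real \<Rightarrow> real \<Rightarrow> real" where
  "aa s c u = u^2 - (s - u*c)^2"
definition mmf :: "real \<Rightarrow> real \<Rightarrow> real \<times> real \<Rightarrow> real" where
  "mmf s c z = - aa s c (snd z) / (1 + sqrt (1 + (fst z)^2 * aa s c (snd z)))"
definition AAf :: "real \<Rightarrow> real \<Rightarrow> real \<Rightarrow> real \<Rightarrow> real \<times> real \<Rightarrow> real" where
  "AAf k R s c z = 1 - 2*k*mmf s c z + (R^2+k^2) * (fst z)^2 * (mmf s c z)^2"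
definition BBf :: "real \<Rightarrow> real \<Rightarrow> real \<Rightarrow> real \<times> real \<Rightarrow> real" where
  "BBf R s c z = 2*R*mmf s c z * sqrt (1 + (snd z)^2)"
definition Phip :: "real \<Rightarrow> real \<Rightarrow> real \<Rightarrow> real \<Rightarrow> real \<times> real \<Rightarrow> real" where
  "Phip k R s c z = AAf k R s c z + fst z * BBf R s c z"
definition Phim :: "real \<Rightarrow> real \<Rightarrow> real \<Rightarrow> real \<Rightarrow> real \<times> real \<Rightarrow> real" where
  "Phim k R s c z = AAf k R s c z - fst z * BBf R s c z"
definition Udom :: "real \<Rightarrow> real \<Rightarrow> (real \<times> real) set" where
  "Udom s c = {z. 0 < 1 + (fst z)^2 * aa s c (snd z)}"

lemma open_Udom: "open (Udom s c)"
  unfolding Udom_def aa_def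
  by (rule open_Collect_less) (auto intro!: continuous_intros)

lemma sm_aa: "(\<lambda>z. aa s c (snd z)) \<in> sm U"
  unfolding aa_def by (intro sm_diff sm_pow sm_mult sm_snd sm_const)

lemma sm_mmf: "mmf s c \<in> sm (Udom s c)"
proof -
  have v: "(\<lambda>z. 1 + (fst z)^2 * aa s c (snd z)) \<in> sm (Udom s c)"
    by (intro sm_add sm_mult sm_pow sm_fst sm_const sm_aa)
  have r: "(\<lambda>z. sqrt (1 + (fst z)^2 * aa s c (snd z))) \<in> sm (Udom s c)"
    by (rule sm_sqrt[OF v]) (auto simp: Udom_def)
  have "(\<lambda>z. - aa s c (snd z) / (1 + sqrt (1 + (fst z)^2 * aa s c (snd z)))) \<in> sm (Udom s c)"
  proof (rule sm_div[OF sm_minus[OF sm_aa] sm_add[OF sm_const r]], intro ballI)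
    fix z assume "z \<in> Udom s c"
    then have "sqrt (1 + (fst z)^2 * aa s c (snd z)) > 0" by (simp add: Udom_def)
    then show "1 + sqrt (1 + (fst z)^2 * aa s c (snd z)) \<noteq> 0" by linarith
  qed
  then show ?thesis unfolding mmf_def[abs_def] .
qed

lemma sm_BBf: "BBf R s c \<in> sm (Udom s c)"
proof -
  have "(\<lambda>z. sqrt (1 + (snd z)^2)) \<in> sm (Udom s c)"
    by (rule sm_sqrt, intro sm_add sm_pow sm_snd sm_const) (auto simp: add_pos_nonneg)
  then have "(\<lambda>z. 2*R*mmf s c z * sqrt (1 + (snd z)^2)) \<in> sm (Udom s c)"
    using sm_mmf by (intro sm_mult sm_const) auto
  then show ?thesis unfolding BBf_def[abs_def] .
qed

lemma sm_AAf: "AAf k R s c \<in> sm (Udom s c)"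
proof -
  have "(\<lambda>z. 1 - 2*k*mmf s c z + (R^2+k^2) * (fst z)^2 * (mmf s c z)^2) \<in> sm (Udom s c)"
    using sm_mmf by (intro sm_add sm_diff sm_mult sm_pow sm_const sm_fst) auto
  then show ?thesis unfolding AAf_def[abs_def] .
qed

lemma sm_Phip: "Phip k R s c \<in> sm (Udom s c)"
proof -
  have "(\<lambda>z. AAf k R s c z + fst z * BBf R s c z) \<in> sm (Udom s c)"
    using sm_AAf sm_BBf by (intro sm_add sm_mult sm_fst) auto
  then show ?thesis unfolding Phip_def[abs_def] .
qed

lemma sm_Phim: "Phim k R s c \<in> sm (Udom s c)"
proof -
  have "(\<lambda>z. AAf k R s c z - fst z * BBf R s c z) \<in> sm (Udom s c)"
    using sm_AAf sm_BBf by (intro sm_diff sm_mult sm_fst) auto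
  then show ?thesis unfolding Phim_def[abs_def] .
qed


lemma cs1: "(cpar t)^2 + (spar t)^2 = 1"
proof -
  have p: "1 + t^2 > 0" by (simp add: add_pos_nonneg)
  have e: "(1 - t^2)^2 + (2*t)^2 = (1+t^2)^2" by algebra
  have "(cpar t)^2 + (spar t)^2 = ((1 - t^2)^2 + (2*t)^2) / (1+t^2)^2"
    unfolding cpar_def spar_def by (simp add: power_divide add_divide_distrib)
  also have "\<dots> = 1" using p by (simp only: e) simp
  finally show ?thesis .
qed

lemma spar_nz: "t \<noteq> 0 \<Longrightarrow> spar t \<noteq> 0"
proof -
  have p: "1 + t^2 > 0" by (simp add: add_pos_nonneg)
  assume "t \<noteq> 0" then show ?thesis using p unfolding spar_def by simp
qed

lemma gk_aa: "gk k t u = 1 + k * aa (spar t) (cpar t) u"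
proof -
  have e: "(cpar t)^2 = 1 - (spar t)^2" using cs1[of t] by simp
  show ?thesis unfolding gk_def aa_def
    by (simp add: power2_eq_square algebra_simps e[unfolded power2_eq_square])
qed

lemma gk_sq: "gk k t u = k * (spar t * u + cpar t)^2 + 1 - k"
proof -
  have e: "(cpar t)^2 = 1 - (spar t)^2" using cs1[of t] by simp
  show ?thesis unfolding gk_def
    by (simp add: power2_eq_square algebra_simps e[unfolded power2_eq_square])
qed

lemma Phi0: "Phip k R s c (0,u) = 1 + k * aa s c u" "Phim k R s c (0,u) = 1 + k * aa s c u"
  by (simp_all add: Phip_def Phim_def AAf_def mmf_def)

lemma dg: "((\<lambda>u. 1 + k * aa s c u) has_real_derivative k * (2*u + 2*c*(s - u*c))) (at u)"
  unfolding aa_def by (auto intro!: derivative_eq_intros simp: algebra_simps)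

lemma G_eq:
  assumes X: "X \<noteq> 0" and U: "(X,u) \<in> Udom (spar t) (cpar t)"
  shows "trisectorG k R t X u = Phip k R (spar t) (cpar t) (X,u) * Phim k R (spar t) (cpar t) (X,u)"
proof -
  define s where "s = spar t"
  define c where "c = cpar t"
  define a where "a = aa s c u"
  define v where "v = 1 + X^2 * a"
  define r where "r = sqrt v"
  define m where "m = mmf s c (X,u)"
  have v: "v > 0" using U by (simp add: Udom_def v_def a_def s_def c_def)
  have r: "r > 0" "r^2 = v" using v by (simp_all add: r_def)
  have m: "m = - a / (1 + r)" by (simp add: m_def mmf_def a_def r_def v_def)
  have om: "omega s c X (u*X) = 1 - r"
  proof -
    have "1 + (u*X)^2 - (X * s - u*X*c)^2 = v"
      by (simp add: v_def a_def aa_def power2_eq_square algebra_simps)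
    then show ?thesis by (simp add: omega_def r_def)
  qed
  have W: "1 - r = X^2 * m"
  proof -
    have "(1 - r) * (1 + r) = -(X^2 * a)" using r by (simp add: v_def power2_eq_square algebra_simps)
    then show ?thesis using r(1) by (simp add: m field_simps)
  qed
  define A where "A = AAf k R s c (X,u)"
  define B where "B = BBf R s c (X,u)"
  have A: "A = 1 - 2*k*m + (R^2+k^2) * X^2 * m^2" by (simp add: A_def AAf_def m_def)
  have B2: "B^2 = 4*R^2*m^2*(1 + u^2)"
  proof -
    have "(sqrt (1 + u^2))^2 = 1 + u^2" by (simp add: add_pos_nonneg)
    then show ?thesis by (simp add: B_def BBf_def m_def power_mult_distrib)
  qed
  have F: "F2h k R X (u*X) 1 (X^2*m) = X^4 * (A^2 - X^2 * B^2)"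
    unfolding F2h_def A B2 by algebra
  have "trisectorG k R t X u = F2h k R X (u*X) 1 (X^2*m) / X^4"
    using X om W by (simp add: trisectorG_def s_def c_def)
  also have "\<dots> = A^2 - X^2 * B^2" using X by (simp add: F)
  also have "\<dots> = (A + X*B) * (A - X*B)" by algebra
  finally show ?thesis by (simp add: Phip_def Phim_def A_def B_def s_def c_def)
qed


lemma local1:
  fixes k R s c u0 :: real
  assumes R: "R > 0" and k: "k \<noteq> 0"
    and g0: "1 + k * aa s c u0 = 0" and g1: "k * (2*u0 + 2*c*(s - u0*c)) \<noteq> 0"
  shows "\<exists>\<epsilon> > 0. \<exists>\<delta> > 0. \<exists>\<phi>1 \<phi>2 :: real \<Rightarrow> real.
           smooth_on {-\<epsilon><..<\<epsilon>} \<phi>1 \<and> smooth_on {-\<epsilon><..<\<epsilon>} \<phi>2 \<and>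
           \<phi>1 0 = u0 \<and> \<phi>2 0 = u0 \<and> deriv \<phi>1 0 \<noteq> deriv \<phi>2 0 \<and>
           (\<forall>X\<in>{-\<epsilon><..<\<epsilon>}. \<bar>\<phi>1 X - u0\<bar> < \<delta> \<and> \<bar>\<phi>2 X - u0\<bar> < \<delta>) \<and>
           (\<forall>X u. \<bar>X\<bar> < \<epsilon> \<and> \<bar>u - u0\<bar> < \<delta> \<longrightarrow> (X,u) \<in> Udom s c \<and>
              (Phip k R s c (X,u) * Phim k R s c (X,u) = 0 \<longleftrightarrow> u = \<phi>1 X \<or> u = \<phi>2 X))"
proof -
  define U where "U = Udom s c"
  define Pp where "Pp = Phip k R s c"
  define Pm where "Pm = Phim k R s c"
  define g' where "g' = k * (2*u0 + 2*c*(s - u0*c))"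
  have U: "open U" by (simp add: U_def open_Udom)
  have z0: "(0,u0) \<in> U" by (simp add: U_def Udom_def)
  have smP: "Pp \<in> sm U" "Pm \<in> sm U" "BBf R s c \<in> sm U"
    by (simp_all add: U_def Pp_def Pm_def sm_Phip sm_Phim sm_BBf)
  obtain p1 p2 where p: "p1 \<in> sm U" "p2 \<in> sm U"
    "\<forall>z\<in>U. (Pp has_derivative (\<lambda>h. fst h * p1 z + snd h * p2 z)) (at z)"
    using sm_deriv[OF smP(1)] by blast
  obtain m1 m2 where m: "m1 \<in> sm U" "m2 \<in> sm U"
    "\<forall>z\<in>U. (Pm has_derivative (\<lambda>h. fst h * m1 z + snd h * m2 z)) (at z)"
    using sm_deriv[OF smP(2)] by blast
  obtain b1 b2 where b: "\<forall>z\<in>U. (BBf R s c has_derivative (\<lambda>h. fst h * b1 z + snd h * b2 z)) (at z)"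
    using sm_deriv[OF smP(3)] by blast
  have e0: "(\<lambda>u. Pp (0,u)) = (\<lambda>u. 1 + k * aa s c u)" "(\<lambda>u. Pm (0,u)) = (\<lambda>u. 1 + k * aa s c u)"
    by (simp_all add: Pp_def Pm_def Phi0)
  have p2v: "p2 (0,u0) = g'"
    using DERIV_unique[OF partial2[OF p(3)[rule_format, OF z0], unfolded e0] dg[of k s c u0]] by (simp add: g'_def)
  have m2v: "m2 (0,u0) = g'"
    using DERIV_unique[OF partial2[OF m(3)[rule_format, OF z0], unfolded e0] dg[of k s c u0]] by (simp add: g'_def)
  have d1: "((\<lambda>X. Pp (X,u0) - Pm (X,u0)) has_real_derivative p1 (0,u0) - m1 (0,u0)) (at 0)"
    by (rule DERIV_diff[OF partial1[OF p(3)[rule_format, OF z0]] partial1[OF m(3)[rule_format, OF z0]]])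
  have "((\<lambda>X. 2*X) has_real_derivative 2) (at 0)" by (auto intro!: derivative_eq_intros)
  from DERIV_mult[OF this partial1[OF b[rule_format, OF z0]]]
  have d2: "((\<lambda>X. 2*X * BBf R s c (X,u0)) has_real_derivative 2 * BBf R s c (0,u0)) (at 0)" by simp
  have "(\<lambda>X. Pp (X,u0) - Pm (X,u0)) = (\<lambda>X. 2*X * BBf R s c (X,u0))"
    by (simp add: fun_eq_iff Pp_def Pm_def Phip_def Phim_def)
  then have pm1: "p1 (0,u0) - m1 (0,u0) = 2 * BBf R s c (0,u0)"
    using DERIV_unique[OF d1] d2 by simp
  have a0: "aa s c u0 \<noteq> 0" using g0 by auto
  have "sqrt (1 + u0^2) > 0" by (simp add: add_pos_nonneg)
  then have B0: "BBf R s c (0,u0) \<noteq> 0" using R a0 by (simp add: BBf_def mmf_def)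
  have g'nz: "g' \<noteq> 0" using g1 by (simp add: g'_def)
  have Pp0: "Pp (0,u0) = 0" "Pm (0,u0) = 0" using g0 by (simp_all add: Pp_def Pm_def Phi0)
  obtain dp where dp: "dp > 0" "\<forall>\<delta>. 0 < \<delta> \<and> \<delta> \<le> dp \<longrightarrow> (\<exists>\<epsilon>>0. \<exists>\<phi>. smooth_on {-\<epsilon><..<\<epsilon>} \<phi> \<and> \<phi> 0 = u0 \<and>
      (\<phi> has_real_derivative (- p1 (0,u0) / p2 (0,u0))) (at 0) \<and>
      (\<forall>X\<in>{-\<epsilon><..<\<epsilon>}. \<bar>\<phi> X - u0\<bar> < \<delta> \<and> Pp (X, \<phi> X) = 0) \<and>
      (\<forall>X u. \<bar>X\<bar> < \<epsilon> \<and> \<bar>u - u0\<bar> < \<delta> \<longrightarrow> (X,u) \<in> U \<and> (Pp (X,u) = 0 \<longrightarrow> u = \<phi> X)))"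
    using curve[OF U smP(1) p(1,2) p(3) z0 Pp0(1)] p2v g'nz by auto
  obtain dm where dm: "dm > 0" "\<forall>\<delta>. 0 < \<delta> \<and> \<delta> \<le> dm \<longrightarrow> (\<exists>\<epsilon>>0. \<exists>\<phi>. smooth_on {-\<epsilon><..<\<epsilon>} \<phi> \<and> \<phi> 0 = u0 \<and>
      (\<phi> has_real_derivative (- m1 (0,u0) / m2 (0,u0))) (at 0) \<and>
      (\<forall>X\<in>{-\<epsilon><..<\<epsilon>}. \<bar>\<phi> X - u0\<bar> < \<delta> \<and> Pm (X, \<phi> X) = 0) \<and>
      (\<forall>X u. \<bar>X\<bar> < \<epsilon> \<and> \<bar>u - u0\<bar> < \<delta> \<longrightarrow> (X,u) \<in> U \<and> (Pm (X,u) = 0 \<longrightarrow> u = \<phi> X)))"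
    using curve[OF U smP(2) m(1,2) m(3) z0 Pp0(2)] m2v g'nz by auto
  define \<delta> where "\<delta> = min dp dm"
  have \<delta>: "0 < \<delta>" "\<delta> \<le> dp" "\<delta> \<le> dm" using dp dm by (auto simp: \<delta>_def)
  obtain ep \<phi>p where ep: "ep > 0" "smooth_on {-ep<..<ep} \<phi>p" "\<phi>p 0 = u0"
      "(\<phi>p has_real_derivative (- p1 (0,u0) / p2 (0,u0))) (at 0)"
      "\<forall>X\<in>{-ep<..<ep}. \<bar>\<phi>p X - u0\<bar> < \<delta> \<and> Pp (X, \<phi>p X) = 0"
      "\<forall>X u. \<bar>X\<bar> < ep \<and> \<bar>u - u0\<bar> < \<delta> \<longrightarrow> (X,u) \<in> U \<and> (Pp (X,u) = 0 \<longrightarrow> u = \<phi>p X)"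
    using dp(2)[rule_format, of \<delta>] \<delta> by blast
  obtain em \<phi>m where em: "em > 0" "smooth_on {-em<..<em} \<phi>m" "\<phi>m 0 = u0"
      "(\<phi>m has_real_derivative (- m1 (0,u0) / m2 (0,u0))) (at 0)"
      "\<forall>X\<in>{-em<..<em}. \<bar>\<phi>m X - u0\<bar> < \<delta> \<and> Pm (X, \<phi>m X) = 0"
      "\<forall>X u. \<bar>X\<bar> < em \<and> \<bar>u - u0\<bar> < \<delta> \<longrightarrow> (X,u) \<in> U \<and> (Pm (X,u) = 0 \<longrightarrow> u = \<phi>m X)"
    using dm(2)[rule_format, of \<delta>] \<delta> by blast
  define \<epsilon> where "\<epsilon> = min ep em"
  have \<epsilon>: "0 < \<epsilon>" "\<epsilon> \<le> ep" "\<epsilon> \<le> em" using ep em by (auto simp: \<epsilon>_def)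
  have dd: "deriv \<phi>p 0 \<noteq> deriv \<phi>m 0"
  proof -
    have "deriv \<phi>p 0 = - p1 (0,u0) / g'" using DERIV_imp_deriv[OF ep(4)] p2v by simp
    moreover have "deriv \<phi>m 0 = - m1 (0,u0) / g'" using DERIV_imp_deriv[OF em(4)] m2v by simp
    moreover have "p1 (0,u0) \<noteq> m1 (0,u0)" using pm1 B0 by auto
    ultimately show ?thesis using g'nz by (auto simp: divide_inverse)
  qed
  show ?thesis
  proof (rule exI[of _ \<epsilon>], rule conjI[OF \<epsilon>(1)], rule exI[of _ \<delta>], rule conjI[OF \<delta>(1)],
      rule exI[of _ \<phi>p], rule exI[of _ \<phi>m], intro conjI dd ep(3) em(3))
    show "smooth_on {-\<epsilon><..<\<epsilon>} \<phi>p" by (rule smooth_on_subset[OF ep(2)]) (use \<epsilon> in auto)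
    show "smooth_on {-\<epsilon><..<\<epsilon>} \<phi>m" by (rule smooth_on_subset[OF em(2)]) (use \<epsilon> in auto)
    show "\<forall>X\<in>{-\<epsilon><..<\<epsilon>}. \<bar>\<phi>p X - u0\<bar> < \<delta> \<and> \<bar>\<phi>m X - u0\<bar> < \<delta>"
      using ep(5) em(5) \<epsilon> by auto
    show "\<forall>X u. \<bar>X\<bar> < \<epsilon> \<and> \<bar>u - u0\<bar> < \<delta> \<longrightarrow> (X,u) \<in> Udom s c \<and>
              (Phip k R s c (X,u) * Phim k R s c (X,u) = 0 \<longleftrightarrow> u = \<phi>p X \<or> u = \<phi>m X)"
    proof (intro allI impI)
      fix X u assume a: "\<bar>X\<bar> < \<epsilon> \<and> \<bar>u - u0\<bar> < \<delta>"
      then have Xp: "\<bar>X\<bar> < ep" "\<bar>X\<bar> < em" using \<epsilon> by auto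
      have "(X,u) \<in> U" using ep(6) Xp a by blast
      moreover have "Pp (X,u) * Pm (X,u) = 0 \<longleftrightarrow> u = \<phi>p X \<or> u = \<phi>m X"
      proof
        assume "Pp (X,u) * Pm (X,u) = 0"
        then have "Pp (X,u) = 0 \<or> Pm (X,u) = 0" by simp
        then show "u = \<phi>p X \<or> u = \<phi>m X" using ep(6) em(6) Xp a by blast
      next
        assume "u = \<phi>p X \<or> u = \<phi>m X"
        then show "Pp (X,u) * Pm (X,u) = 0" using ep(5) em(5) Xp by (auto simp: abs_less_iff)
      qed
      ultimately show "(X,u) \<in> Udom s c \<and>
              (Phip k R s c (X,u) * Phim k R s c (X,u) = 0 \<longleftrightarrow> u = \<phi>p X \<or> u = \<phi>m X)"
        by (simp add: U_def Pp_def Pm_def)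
    qed
  qed
qed


theorem theorem5:
  fixes k R t :: real
  assumes "R > 0" and "t \<noteq> 0" and "k \<noteq> 0" and "k \<noteq> 1"
  shows "((k < 0 \<or> k > 1) \<longrightarrow>
           (\<exists>u1 u2. u1 \<noteq> u2 \<and> gk k t u1 = 0 \<and> gk k t u2 = 0 \<and>
              (\<forall>u. gk k t u = 0 \<longrightarrow> u = u1 \<or> u = u2) \<and>
              (\<forall>u0\<in>{u1, u2}.
                 \<exists>\<epsilon> > 0. \<exists>\<delta> > 0. \<exists>\<phi>1 \<phi>2 :: real \<Rightarrow> real.
                   smooth_on {-\<epsilon><..<\<epsilon>} \<phi>1 \<and> smooth_on {-\<epsilon><..<\<epsilon>} \<phi>2 \<and>
                   \<phi>1 0 = u0 \<and> \<phi>2 0 = u0 \<and> deriv \<phi>1 0 \<noteq> deriv \<phi>2 0 \<and>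
                   (\<forall>X\<in>{-\<epsilon><..<\<epsilon>}. \<bar>\<phi>1 X - u0\<bar> < \<delta> \<and> \<bar>\<phi>2 X - u0\<bar> < \<delta>) \<and>
                   (\<forall>X u. 0 < \<bar>X\<bar> \<and> \<bar>X\<bar> < \<epsilon> \<and> \<bar>u - u0\<bar> < \<delta> \<longrightarrow>
                      (trisectorG k R t X u = 0 \<longleftrightarrow> u = \<phi>1 X \<or> u = \<phi>2 X)))))
       \<and> ((0 < k \<and> k < 1) \<longrightarrow>
           (\<forall>u. gk k t u \<noteq> 0) \<and>
           (\<forall>u0. (0, u0) \<notin> closure {(X, u). X \<noteq> 0 \<and> trisectorG k R t X u = 0}))"
proof -
  define s where "s = spar t"
  define c where "c = cpar t"
  have s0: "s \<noteq> 0" using spar_nz assms(2) by (simp add: s_def)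
  have cs: "c^2 + s^2 = 1" using cs1 by (simp add: s_def c_def)
  have gsq: "gk k t u = k*(s*u+c)^2 + 1 - k" for u using gk_sq by (simp add: s_def c_def)
  have gaa: "gk k t u = 1 + k * aa s c u" for u using gk_aa by (simp add: s_def c_def)
  have gder: "k*(2*u + 2*c*(s - u*c)) = 2*k * s * (s*u+c)" for u
  proof -
    have "k*(2*u + 2*c*(s - u*c)) - 2*k * s * (s*u+c) = 2*k*u*(1 - (c^2 + s^2))" by algebra
    then show ?thesis using cs by simp
  qed
  have Geq: "trisectorG k R t X u = Phip k R s c (X,u) * Phim k R s c (X,u)"
    if "X \<noteq> 0" "(X,u) \<in> Udom s c" for X u
    using G_eq[of X u t k R] that by (simp add: s_def c_def)
  show ?thesis
  proof (intro conjI impI)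
    assume kk: "k < 0 \<or> k > 1"
    have kp: "k*(k-1) > 0" using kk by (auto intro: mult_neg_neg mult_pos_pos)
    define d where "d = sqrt (k*(k-1))"
    have d: "d > 0" "d^2 = k*(k-1)" using kp by (simp_all add: d_def)
    define u1 where "u1 = (d/k - c)/s"
    define u2 where "u2 = (-d/k - c)/s"
    have su1: "s*u1 + c = d/k" and su2: "s*u2 + c = -d/k" using s0 by (simp_all add: u1_def u2_def)
    have dk: "(d/k)^2 = (k-1)/k" using d(2) assms(3) by (simp add: power_divide power2_eq_square field_simps)
    have root: "gk k t u = 0 \<longleftrightarrow> (s*u + c)^2 = (d/k)^2" for u
    proof -
      have "gk k t u = 0 \<longleftrightarrow> k * (s*u+c)^2 = k - 1" using gsq[of u] by auto
      also have "\<dots> \<longleftrightarrow> (s*u+c)^2 = (k-1)/k" using assms(3) by (simp add: field_simps)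
      finally show ?thesis using dk by simp
    qed
    have r1: "gk k t u1 = 0" using root su1 by simp
    have r2: "gk k t u2 = 0" using root su2 by simp
    have dk0: "d/k \<noteq> 0" using d assms(3) by simp
    have neq: "u1 \<noteq> u2"
    proof
      assume "u1 = u2"
      then have "d/k = -d/k" using su1 su2 by simp
      then show False using dk0 by simp
    qed
    have allr: "u = u1 \<or> u = u2" if "gk k t u = 0" for u
    proof -
      have "(s*u + c)^2 = (d/k)^2" using root that by simp
      then have "s*u + c = d/k \<or> s*u + c = -(d/k)" using power2_eq_iff by blast
      then have "s*u = s*u1 \<or> s*u = s*u2" by (elim disjE) (use su1 su2 in linarith)+
      then show ?thesis using s0 by auto
    qed
    have loc: "\<exists>\<epsilon> > 0. \<exists>\<delta> > 0. \<exists>\<phi>1 \<phi>2 :: real \<Rightarrow> real.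
                   smooth_on {-\<epsilon><..<\<epsilon>} \<phi>1 \<and> smooth_on {-\<epsilon><..<\<epsilon>} \<phi>2 \<and>
                   \<phi>1 0 = u0 \<and> \<phi>2 0 = u0 \<and> deriv \<phi>1 0 \<noteq> deriv \<phi>2 0 \<and>
                   (\<forall>X\<in>{-\<epsilon><..<\<epsilon>}. \<bar>\<phi>1 X - u0\<bar> < \<delta> \<and> \<bar>\<phi>2 X - u0\<bar> < \<delta>) \<and>
                   (\<forall>X u. 0 < \<bar>X\<bar> \<and> \<bar>X\<bar> < \<epsilon> \<and> \<bar>u - u0\<bar> < \<delta> \<longrightarrow>
                      (trisectorG k R t X u = 0 \<longleftrightarrow> u = \<phi>1 X \<or> u = \<phi>2 X))"
      if u0: "u0 \<in> {u1, u2}" for u0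
    proof -
      have g0: "1 + k * aa s c u0 = 0" using u0 r1 r2 gaa by auto
      have "s*u0 + c = d/k \<or> s*u0 + c = -d/k" using u0 su1 su2 by auto
      then have "2*k * s * (s*u0+c) \<noteq> 0" using assms(3) s0 dk0 by auto
      then have g1: "k * (2*u0 + 2*c*(s - u0*c)) \<noteq> 0" using gder by simp
      obtain \<epsilon> \<delta> \<phi>1 \<phi>2 where L: "\<epsilon> > 0" "\<delta> > 0"
           "smooth_on {-\<epsilon><..<\<epsilon>} \<phi>1" "smooth_on {-\<epsilon><..<\<epsilon>} \<phi>2"
           "\<phi>1 0 = u0" "\<phi>2 0 = u0" "deriv \<phi>1 0 \<noteq> deriv \<phi>2 0"
           "\<forall>X\<in>{-\<epsilon><..<\<epsilon>}. \<bar>\<phi>1 X - u0\<bar> < \<delta> \<and> \<bar>\<phi>2 X - u0\<bar> < \<delta>"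
           "\<forall>X u. \<bar>X\<bar> < \<epsilon> \<and> \<bar>u - u0\<bar> < \<delta> \<longrightarrow> (X,u) \<in> Udom s c \<and>
              (Phip k R s c (X,u) * Phim k R s c (X,u) = 0 \<longleftrightarrow> u = \<phi>1 X \<or> u = \<phi>2 X)"
        using local1[OF assms(1) assms(3) g0 g1] by blast
      have "\<forall>X u. 0 < \<bar>X\<bar> \<and> \<bar>X\<bar> < \<epsilon> \<and> \<bar>u - u0\<bar> < \<delta> \<longrightarrow>
                      (trisectorG k R t X u = 0 \<longleftrightarrow> u = \<phi>1 X \<or> u = \<phi>2 X)"
      proof (intro allI impI)
        fix X u assume a: "0 < \<bar>X\<bar> \<and> \<bar>X\<bar> < \<epsilon> \<and> \<bar>u - u0\<bar> < \<delta>"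
        then have "X \<noteq> 0" by auto
        then show "trisectorG k R t X u = 0 \<longleftrightarrow> u = \<phi>1 X \<or> u = \<phi>2 X"
          using L(9) a Geq by auto
      qed
      then show ?thesis using L by blast
    qed
    show "\<exists>u1 u2. u1 \<noteq> u2 \<and> gk k t u1 = 0 \<and> gk k t u2 = 0 \<and>
              (\<forall>u. gk k t u = 0 \<longrightarrow> u = u1 \<or> u = u2) \<and>
              (\<forall>u0\<in>{u1, u2}.
                 \<exists>\<epsilon> > 0. \<exists>\<delta> > 0. \<exists>\<phi>1 \<phi>2 :: real \<Rightarrow> real.
                   smooth_on {-\<epsilon><..<\<epsilon>} \<phi>1 \<and> smooth_on {-\<epsilon><..<\<epsilon>} \<phi>2 \<and>
                   \<phi>1 0 = u0 \<and> \<phi>2 0 = u0 \<and> deriv \<phi>1 0 \<noteq> deriv \<phi>2 0 \<and>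
                   (\<forall>X\<in>{-\<epsilon><..<\<epsilon>}. \<bar>\<phi>1 X - u0\<bar> < \<delta> \<and> \<bar>\<phi>2 X - u0\<bar> < \<delta>) \<and>
                   (\<forall>X u. 0 < \<bar>X\<bar> \<and> \<bar>X\<bar> < \<epsilon> \<and> \<bar>u - u0\<bar> < \<delta> \<longrightarrow>
                      (trisectorG k R t X u = 0 \<longleftrightarrow> u = \<phi>1 X \<or> u = \<phi>2 X)))"
      using neq r1 r2 allr loc by blast
  next
    assume kk: "0 < k \<and> k < 1"
    have gpos: "gk k t u > 0" for u
    proof -
      have "k * (s*u+c)^2 \<ge> 0" using kk by simp
      then show ?thesis using gsq[of u] kk by linarith
    qed
    show "\<forall>u. gk k t u \<noteq> 0" using gpos by (metis less_irrefl)
    show "\<forall>u0. (0, u0) \<notin> closure {(X, u). X \<noteq> 0 \<and> trisectorG k R t X u = 0}"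
    proof (intro allI notI)
      fix u0 assume cl: "(0, u0) \<in> closure {(X, u). X \<noteq> 0 \<and> trisectorG k R t X u = 0}"
      define P where "P = (\<lambda>z. Phip k R s c z * Phim k R s c z)"
      have Psm: "P \<in> sm (Udom s c)" unfolding P_def by (intro sm_mult sm_Phip sm_Phim)
      have z0: "(0,u0) \<in> Udom s c" by (simp add: Udom_def)
      have Pc: "isCont P (0,u0)" by (rule sm_isCont[OF Psm z0])
      have P0: "P (0,u0) = (gk k t u0)^2" by (simp add: P_def Phi0 gaa power2_eq_square)
      then have P0p: "P (0,u0) > 0" using gpos[of u0] by simp
      obtain e where e: "e > 0" "\<forall>z. dist z (0,u0) < e \<longrightarrow> dist (P z) (P (0,u0)) < P (0,u0)"
        using Pc P0p continuous_at_eps_delta[of "(0,u0)" P] by blast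
      define T where "T = ball (0,u0) e \<inter> Udom s c"
      have T: "open T" "(0,u0) \<in> T" using e z0 open_Udom by (auto simp: T_def)
      then have "{(X, u). X \<noteq> 0 \<and> trisectorG k R t X u = 0} \<inter> T \<noteq> {}"
        using cl closure_iff_nhds_not_empty by blast
      then obtain X u where Xu: "X \<noteq> 0" "trisectorG k R t X u = 0" "(X,u) \<in> T" by auto
      have "P (X,u) = 0" using Geq[of X u] Xu by (simp add: P_def T_def)
      moreover have "dist (X,u) (0,u0) < e" using Xu(3) by (simp add: T_def dist_commute)
      ultimately have "dist (P (X,u)) (P (0,u0)) < P (0,u0)" using e(2) by blast
      then have "\<bar>P (X,u) - P (0,u0)\<bar> < P (0,u0)" by (simp only: dist_real_def)
      then show False using \<open>P (X,u) = 0\<close> P0p by simp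
    qed
  qed
qed

end
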